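(* Let $S_n(x)=(18n+24)\sin(x)-(9n+27)\sin((n+1)x)+9n\sin((n+2)x)+2\sin(4x)-\sin(5x)$. Let $n=3m$ with $m\geq 7$ an integer, and let $x\in(2\pi/3-1/n,\,2\pi/3)$. Then $$S_n''(x)=-(18n+24)\sin(x)+(9n+27)(n+1)^2\sin((n+1)x)-9n(n+2)^2\sin((n+2)x)-32\sin(4x)+25\sin(5x)>0.$$ *)

theory Defs
  imports "HOL-Analysis.Analysis"
begin

definition S :: "nat \<Rightarrow> real \<Rightarrow> real" where
  "S n x = (18 * real n + 24) * sin x - (9 * real n + 27) * sin ((real n + 1) * x)
           + 9 * real n * sin ((real n + 2) * x) + 2 * sin (4 * x) - sin (5 * x)"

end

theory Submission
  imports Defs
begin

definition S1 :: "nat \<Rightarrow> real \<Rightarrow> real" where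
  "S1 n x = (18 * real n + 24) * cos x - (9 * real n + 27) * (real n + 1) * cos ((real n + 1) * x)
           + 9 * real n * (real n + 2) * cos ((real n + 2) * x) + 8 * cos (4 * x) - 5 * cos (5 * x)"

lemma S_deriv: "((S n) has_real_derivative S1 n x) (at x)"
  unfolding S_def S1_def by (rule derivative_eq_intros refl | simp)+

lemma S1_deriv: "((S1 n) has_real_derivative
    (- (18 * real n + 24) * sin x
           + (9 * real n + 27) * (real n + 1)^2 * sin ((real n + 1) * x)
           - 9 * real n * (real n + 2)^2 * sin ((real n + 2) * x)
           - 32 * sin (4 * x) + 25 * sin (5 * x))) (at x)"
  unfolding S1_def by (rule derivative_eq_intros refl | simp add: power2_eq_square algebra_simps)+

lemma deriv2: "deriv (deriv (S n)) x =
           - (18 * real n + 24) * sin x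
           + (9 * real n + 27) * (real n + 1)^2 * sin ((real n + 1) * x)
           - 9 * real n * (real n + 2)^2 * sin ((real n + 2) * x)
           - 32 * sin (4 * x) + 25 * sin (5 * x)"
proof -
  have "deriv (S n) = S1 n" using S_deriv DERIV_imp_deriv by blast
  then show ?thesis using S1_deriv DERIV_imp_deriv by metis
qed

lemma per0: "sin (2*pi*real m) = 0" "cos (2*pi*real m) = 1"
  using sin_int_2pin[of "int m"] cos_int_2pin[of "int m"] by simp_all
lemma sin_per: "sin (y + 2*pi*real m) = sin y" by (simp add: sin_add per0)
lemma cos_per: "cos (y + 2*pi*real m) = cos y" by (simp add: cos_add per0)

lemma cos_lb: fixes s :: real shows "1 - s^2/2 \<le> cos s"
proof -
  have c: "cos s = 1 - 2 * (sin (s/2))^2"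
    using cos_double_sin[of "s/2"] by simp
  have "\<bar>sin (s/2)\<bar> \<le> \<bar>s/2\<bar>" by (rule abs_sin_x_le_abs_x)
  hence "(sin (s/2))^2 \<le> (s/2)^2"
    by (metis abs_ge_zero power2_abs power_mono)
  thus ?thesis using c by (simp add: power_divide)
qed

theorem lemma6:
  fixes m n :: nat and x :: real
  assumes "n = 3 * m" and "m \<ge> 7"
    and "2 * pi / 3 - 1 / real n < x" and "x < 2 * pi / 3"
  shows "deriv (deriv (S n)) x =
           - (18 * real n + 24) * sin x
           + (9 * real n + 27) * (real n + 1)^2 * sin ((real n + 1) * x)
           - 9 * real n * (real n + 2)^2 * sin ((real n + 2) * x)
           - 32 * sin (4 * x) + 25 * sin (5 * x)
       \<and> deriv (deriv (S n)) x > 0"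
proof -
  define N where "N = real n"
  have N21: "N \<ge> 21" using assms(1,2) unfolding N_def by simp
  have Nm: "N = 3 * real m" using assms(1) unfolding N_def by simp
  define t where "t = 2*pi/3 - x"
  have t0: "0 < t" and t1: "t < 1 / N" using assms(3,4) unfolding t_def N_def by auto
  have tN: "N * t < 1" using t1 N21 by (simp add: field_simps)
  have x: "x = 2*pi/3 - t" unfolding t_def by simp
  define a where "a = (N + 1) * x"
  define b where "b = (N + 2) * x"
  define h where "h = x / 2"
  define s where "s = (2*N+3)*t/2"
  define c where "c = (2*N+3)*x/2"
  have ac: "a = c - h" and bc: "b = c + h" unfolding a_def b_def c_def h_def by (simp_all add: field_simps)
  have "c = (pi - s) + 2*pi*real m" unfolding c_def s_def x Nm by (simp add: field_simps)
  hence cosc: "cos c = - cos s" using cos_per by simp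
  have "sin a - sin b = - 2 * cos c * sin h" unfolding ac bc by (simp add: sin_add sin_diff)
  hence diff: "sin a - sin b = 2 * cos s * sin h" using cosc by simp
  have "a = (2*pi/3 - (N+1)*t) + 2*pi*real m" unfolding a_def x Nm by (simp add: algebra_simps)
  hence sina: "sin a = sin (2*pi/3 - (N+1)*t)" using sin_per by simp
  have "(N+1)*t < 22/21" using tN t1 N21 t0
  proof -
    have "t < 1/21" using t1 N21 by (smt (verit) frac_le zero_less_divide_1_iff)
    thus ?thesis using tN by (simp add: algebra_simps)
  qed
  moreover have "22/21 < 2*pi/3" using pi_gt3 by linarith
  ultimately have g1: "0 < 2*pi/3 - (N+1)*t" by linarith
  have "0 < (N+1)*t" using t0 N21 by simp
  hence g2: "2*pi/3 - (N+1)*t < pi" using pi_gt_zero by linarith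
  note g1 g2
  hence sa: "sin a \<ge> 0" unfolding sina by (simp add: sin_ge_zero)
  have t21: "t < 1/21" using t1 N21 by (smt (verit) frac_le zero_less_divide_1_iff)
  have s0: "0 \<le> s" unfolding s_def using t0 N21 by simp
  have "s = N*t + 3*t/2" unfolding s_def by (simp add: algebra_simps)
  hence s1: "s \<le> 11/10" using tN t21 by linarith
  have "s^2 \<le> (11/10)^2" using s0 s1 power_mono by blast
  hence "s^2 \<le> 121/100" by (simp add: power2_eq_square)
  hence cs: "cos s \<ge> 39/100" using cos_lb[of s] by linarith
  have "pi/6 \<le> h" "h \<le> pi/2" unfolding h_def x using t21 pi_gt3 t0 by (simp_all add: field_simps)
  hence "sin (pi/6) \<le> sin h" using sin_mono_le_eq[of "pi/6" h] by simp
  hence sh: "sin h \<ge> 1/2" by (simp add: sin_30)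
  have prod: "2 * cos s * sin h \<ge> 39/100"
  proof -
    have "2 * cos s * sin h \<ge> 2 * (39/100) * (1/2)"
      using cs sh by (intro mult_mono) auto
    thus ?thesis by simp
  qed
  define A where "A = (9 * N + 27) * (N + 1)^2"
  define B where "B = 9 * N * (N + 2)^2"
  have AB: "A - B = 9*N^2 + 27*N + 27" unfolding A_def B_def by (simp add: power2_eq_square algebra_simps)
  have "A * sin a - B * sin b = B * (sin a - sin b) + (A - B) * sin a" by (simp add: algebra_simps)
  also have "\<dots> \<ge> B * (39/100)"
  proof -
    have "B \<ge> 0" unfolding B_def using N21 by simp
    hence "B * (sin a - sin b) \<ge> B * (39/100)" unfolding diff using prod by (rule mult_left_mono[rotated])
    moreover have "(A - B) * sin a \<ge> 0" using AB sa N21 by simp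
    ultimately show ?thesis by linarith
  qed
  finally have main: "A * sin a - B * sin b \<ge> B * (39/100)" .
  have Bb: "B \<ge> 9 * N * 23^2"
  proof -
    have "(N+2)^2 \<ge> 23^2" using N21 power_mono[of 23 "N+2" 2] by simp
    thus ?thesis unfolding B_def using N21 by (simp add: mult_left_mono)
  qed
  have rest: "- (18 * N + 24) * sin x - 32 * sin (4 * x) + 25 * sin (5 * x) \<ge> -(18*N + 24) - 57"
  proof -
    have "(18 * N + 24) * sin x \<le> (18*N+24) * 1" using N21 sin_le_one[of x]
      by (intro mult_left_mono) auto
    hence "- (18 * N + 24) * sin x \<ge> -(18*N+24)" by (simp add: algebra_simps)
    moreover have "- 32 * sin (4 * x) \<ge> -32" using sin_le_one[of "4*x"] by simp
    moreover have "25 * sin (5 * x) \<ge> -25" using sin_ge_minus_one[of "5*x"] by simp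
    ultimately show ?thesis by linarith
  qed
  have pos: "- (18 * N + 24) * sin x + A * sin a - B * sin b - 32 * sin (4 * x) + 25 * sin (5 * x) > 0"
  proof -
    have "B \<ge> 4761 * N" using Bb by simp
    thus ?thesis using main rest N21 by linarith
  qed
  show ?thesis using deriv2[of n x] pos unfolding A_def B_def a_def b_def N_def by simp
qed

end
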